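(* Let $\alpha$ be a nonzero real number and let $\gamma(t)=\Psi(u(t),v(t))$ be a regular curve in $\mathbb H^2$ not passing through $N$. Then $\gamma$ is an $\alpha$-stationary curve if and only if $$\kappa=\alpha\,\frac{\langle \mathbf n,\xi\rangle_\epsilon}{\mathsf d}$$ along $\gamma$. Here $\mathbf n$ is the unit normal of $\gamma$, $\mathsf d$ is the hyperbolic distance from $\gamma(t)$ to $N$, and $\xi$ is the unit tangent vector at $\gamma(t)$ of the ray from $N$ through $\gamma(t)$.
   Context: Let $\langle x,y\rangle_\epsilon=x_1y_1+x_2y_2-x_3y_3$ be the Lorentzian inner product on $\mathbb R^3$ and $|x|_\epsilon=\sqrt{|\langle x,x\rangle_\epsilon|}$. The hyperbolic plane is $\mathbb H^2=\{(x,y,z):x^2+y^2-z^2=-1,\ z>0\}$ with the induced metric. It is parametrized by $\Psi(u,v)=(\sinh u\cos v,\sinh u\sin v,\cosh u)$. Let $N=(0,0,1)$. The hyperbolic distance from $\Psi(u,v)$ ($u\ge0$) to $N$ is $u$. Rays from $N$ are the geodesics $u\mapsto\Psi(u,v_0)$, $u>0$. For $p=\Psi(u,v)\neq N$, set $\xi(p)=\Psi_u(u,v)=(\cosh u\cos v,\cosh u\sin v,\sinh u)$; this is the unit tangent of the ray through $p$, pointing away from $N$. For a regular curve $\gamma(t)=\Psi(u(t),v(t))$ with $u>0$, we have $|\gamma'|_\epsilon=\sqrt{u'^2+\sinh^2(u)v'^2}$. Its unit normal is $$\mathbf n=\frac{1}{|\gamma'|_\epsilon}\big(u'\sin v+\sinh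 u\cosh u\,v'\cos v,\ \sinh u\cosh u\,v'\sin v-u'\cos v,\ \sinh^2(u)\,v'\big).$$ Its curvature is $\kappa=\langle\gamma'',\mathbf n\rangle_\epsilon/|\gamma'|_\epsilon^2$. The energy of $\gamma$ is $$E_\alpha[\gamma]=\int_\gamma\mathsf d^\alpha\,ds=\int u^\alpha\sqrt{u'^2+\sinh^2(u)v'^2}\,dt.$$ An $\alpha$-stationary curve is a critical point of $E_\alpha$, i.e. $(u,v)$ satisfies its Euler–Lagrange equations. Throughout the paper, $\alpha\ne0$ and curves avoid $N$. *)

theory Defs
  imports "HOL-Analysis.Analysis"
begin

definition lor :: "real^3 \<Rightarrow> real^3 \<Rightarrow> real" where
  "lor x y = x$1 * y$1 + x$2 * y$2 - x$3 * y$3"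

definition Psi :: "real \<Rightarrow> real \<Rightarrow> real^3" where
  "Psi u v = vector [sinh u * cos v, sinh u * sin v, cosh u]"

text \<open>xi = Psi_u: unit tangent of the ray from N through Psi(u,v).\<close>
definition xi :: "real \<Rightarrow> real \<Rightarrow> real^3" where
  "xi u v = vector [cosh u * cos v, cosh u * sin v, sinh u]"

definition curve :: "(real \<Rightarrow> real) \<Rightarrow> (real \<Rightarrow> real) \<Rightarrow> real \<Rightarrow> real^3" where
  "curve u v t = Psi (u t) (v t)"

definition speed :: "(real \<Rightarrow> real) \<Rightarrow> (real \<Rightarrow> real) \<Rightarrow> real \<Rightarrow> real" where
  "speed u v t = sqrt ((deriv u t)^2 + (sinh (u t))^2 * (deriv v t)^2)"

definition unormal :: "(real \<Rightarrow> real) \<Rightarrow> (real \<Rightarrow> real) \<Rightarrow> real \<Rightarrow> real^3" where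
  "unormal u v t = (1 / speed u v t) *\<^sub>R
     vector [deriv u t * sin (v t) + sinh (u t) * cosh (u t) * deriv v t * cos (v t),
             sinh (u t) * cosh (u t) * deriv v t * sin (v t) - deriv u t * cos (v t),
             (sinh (u t))^2 * deriv v t]"

definition curvature :: "(real \<Rightarrow> real) \<Rightarrow> (real \<Rightarrow> real) \<Rightarrow> real \<Rightarrow> real" where
  "curvature u v t =
     lor (vector_derivative (\<lambda>s. vector_derivative (curve u v) (at s)) (at t)) (unormal u v t)
       / (speed u v t)^2"

text \<open>Euler--Lagrange equations of E_alpha = int u^alpha sqrt(u'^2 + sinh^2(u) v'^2) dt,
  holding at every parameter in I.\<close>
definition alpha_stationary ::
  "real \<Rightarrow> (real \<Rightarrow> real) \<Rightarrow> (real \<Rightarrow> real) \<Rightarrow> real set \<Rightarrow> bool" where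
  "alpha_stationary \<alpha> u v I \<longleftrightarrow> (\<forall>t\<in>I.
     deriv (\<lambda>s. u s powr \<alpha> * deriv u s / speed u v s) t
       = \<alpha> * u t powr (\<alpha> - 1) * speed u v t
         + u t powr \<alpha> * sinh (u t) * cosh (u t) * (deriv v t)^2 / speed u v t
   \<and> deriv (\<lambda>s. u s powr \<alpha> * (sinh (u s))^2 * deriv v s / speed u v s) t = 0)"

end

theory Submission
  imports Defs
begin

lemma vec3_decomp: "vector [a,b,c] = a *\<^sub>R (vector [1,0,0] :: real^3) + b *\<^sub>R vector [0,1,0] + c *\<^sub>R vector [0,0,1]"
  by (simp add: vec_eq_iff forall_3)

lemma hvd_vector3:
  assumes "(f1 has_real_derivative d1) (at x within S)" "(f2 has_real_derivative d2) (at x within S)" "(f3 has_real_derivative d3) (at x within S)"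
  shows "((\<lambda>s. vector [f1 s, f2 s, f3 s] :: real^3) has_vector_derivative vector [d1, d2, d3]) (at x within S)"
proof -
  have e: "(\<lambda>s. vector [f1 s, f2 s, f3 s] :: real^3) = (\<lambda>s. f1 s *\<^sub>R (vector [1,0,0] :: real^3) + f2 s *\<^sub>R vector [0,1,0] + f3 s *\<^sub>R vector [0,0,1])"
    by (rule ext, rule vec3_decomp)
  show ?thesis unfolding e
    apply (subst vec3_decomp)
    by (rule derivative_eq_intros assms has_vector_derivative_const refl)+ (simp add: vec_eq_iff forall_3)
qed

lemma curv_alg:
  fixes sh ch c si u1 u2 v1 v2 :: real
  assumes "c^2 + si^2 = 1" "ch^2 - sh^2 = 1"
  shows "lor (vector [sh * u1 * u1 * c + ch * u2 * c - ch * u1 *  si * v1 - (ch * u1 *  si * v1 + sh * c * v1 * v1 + sh *  si * v2),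
                      sh * u1^2 *  si + ch * u2 *  si + ch * u1 * c * v1 + ch * u1 * c * v1 - sh *  si * v1^2 + sh * c * v2,
                      ch * u1^2 + sh * u2])
             (vector [u1 * si + sh * ch * v1 * c, sh * ch * v1 * si - u1 * c, sh^2 * v1])
       = sh * v1 * (u2 - v1^2 * sh * ch) - u1 * (2 * u1 * v1 * ch + v2 * sh)"
  using assms unfolding lor_def by simp algebra

lemma xi_alg:
  fixes sh ch c si u1 v1 :: real
  assumes "c^2 + si^2 = 1" "ch^2 - sh^2 = 1"
  shows "lor (vector [u1 * si + sh * ch * v1 * c, sh * ch * v1 * si - u1 * c, sh^2 * v1])
             (vector [ch * c, ch *  si, sh]) = sh * v1"
  using assms unfolding lor_def by simp algebra


lemma derivs:
  fixes u v :: "real \<Rightarrow> real"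
  assumes "u differentiable (at t)" "deriv u differentiable (at t)" "v differentiable (at t)" "deriv v differentiable (at t)"
   "u t > 0" "(deriv u t)^2 + (sinh (u t))^2 * (deriv v t)^2 > 0"
  assumes u1_def: "u1 = deriv u t" and u2_def: "u2 = deriv (deriv u) t" and v1_def: "v1 = deriv v t" and v2_def: "v2 = deriv (deriv v) t"
    and spd_def: "spd = speed u v t" and sh_def: "sh = sinh (u t)" and ch_def: "ch = cosh (u t)"
    and ds_def: "ds = (u1 * u2 + sh * ch * u1 * v1^2 + sh^2 * v1 * v2) / spd"
  shows "DERIV (speed u v) t :> ds"
   "DERIV (\<lambda>s. u s powr \<alpha> * deriv u s / speed u v s) t :> ((\<alpha> * u t powr (\<alpha>-1) * u1 * u1 + u2 * u t powr \<alpha>) * spd - u t powr \<alpha> * u1 * ds)/(spd * spd)"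
   "DERIV (\<lambda>s. u s powr \<alpha> * (sinh (u s))^2 * deriv v s / speed u v s) t :> ((\<alpha> * u t powr (\<alpha>-1) * u1 * sh^2 * v1 + u t powr \<alpha> * (2 * sh * ch * u1) * v1 + u t powr \<alpha> * sh^2 * v2) * spd - u t powr \<alpha> * sh^2 * v1 * ds)/(spd * spd)"
proof -
  have du: "DERIV u t :> u1" using assms DERIV_deriv_iff_real_differentiable by simp
  have ddu: "DERIV (deriv u) t :> u2" using assms DERIV_deriv_iff_real_differentiable by simp
  have dv: "DERIV v t :> v1" using assms DERIV_deriv_iff_real_differentiable by simp
  have ddv: "DERIV (deriv v) t :> v2" using assms DERIV_deriv_iff_real_differentiable by simp
  have dQ: "DERIV (\<lambda>s. (deriv u s)^2 + (sinh (u s))^2 * (deriv v s)^2) t :> 2 * (u1 * u2 + sh * ch * u1 * v1^2 + sh^2 * v1 * v2)"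
    apply (rule derivative_eq_intros du ddu dv ddv refl)+
    by (simp add: u1_def v1_def sh_def ch_def algebra_simps power2_eq_square)
  have dsp: "DERIV (speed u v) t :> inverse (spd) / 2 * (2 * (u1 * u2 + sh * ch * u1 * v1^2 + sh^2 * v1 * v2))"
    unfolding speed_def spd_def
    by (rule DERIV_chain2[OF DERIV_real_sqrt[OF assms(6)] dQ])
  have "inverse (spd) / 2 * (2 * (u1 * u2 + sh * ch * u1 * v1^2 + sh^2 * v1 * v2)) = (u1 * u2 + sh * ch * u1 * v1^2 + sh^2 * v1 * v2) / spd"
    by (simp add: divide_simps)
  then show ds: "DERIV (speed u v) t :> ds" using dsp unfolding ds_def by metis
  have spdnz: "spd \<noteq> 0" using assms(6) unfolding spd_def speed_def by simp
  have spdnz': "speed u v t \<noteq> 0" using spdnz spd_def by simp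
  show F1: "DERIV (\<lambda>s. u s powr \<alpha> * deriv u s / speed u v s) t :> ((\<alpha> * u t powr (\<alpha>-1) * u1 * u1 + u2 * u t powr \<alpha>) * spd - u t powr \<alpha> * u1 * ds)/(spd * spd)"
    apply (rule derivative_eq_intros du ddu dv ddv refl assms(5) ds spdnz')+
    by (simp add: spd_def u1_def)
  show F2: "DERIV (\<lambda>s. u s powr \<alpha> * (sinh (u s))^2 * deriv v s / speed u v s) t :> ((\<alpha> * u t powr (\<alpha>-1) * u1 * sh^2 * v1 + u t powr \<alpha> * (2 * sh * ch * u1) * v1 + u t powr \<alpha> * sh^2 * v2) * spd - u t powr \<alpha> * sh^2 * v1 * ds)/(spd * spd)"
    apply (rule derivative_eq_intros du ddu dv ddv refl assms(5) ds spdnz')+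
    by (simp add: spd_def u1_def v1_def sh_def ch_def algebra_simps)
qed


lemma curv_formula:
  fixes u v :: "real \<Rightarrow> real"
  assumes I: "open I" "t \<in> I"
    and du: "\<forall>s\<in>I. u differentiable (at s) \<and> deriv u differentiable (at s)"
    and dv: "\<forall>s\<in>I. v differentiable (at s) \<and> deriv v differentiable (at s)"
  shows "curvature u v t = (1 / speed u v t) * (sinh (u t) * deriv v t * (deriv (deriv u) t - (deriv v t)^2 * sinh (u t) * cosh (u t))
      - deriv u t * (2 * deriv u t * deriv v t * cosh (u t) + deriv (deriv v) t * sinh (u t))) / (speed u v t)^2"
    and "lor (unormal u v t) (xi (u t) (v t)) = (1 / speed u v t) * (sinh (u t) * deriv v t)"
proof -
  define D1 where "D1 s = (vector [cosh (u s) * deriv u s * cos (v s) - sinh (u s) * sin (v s) * deriv v s,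
      cosh (u s) * deriv u s * sin (v s) + sinh (u s) * cos (v s) * deriv v s, sinh (u s) * deriv u s] :: real^3)" for s
  have D1: "(curve u v has_vector_derivative D1 s) (at s)" if "s \<in> I" for s
  proof -
    have a: "DERIV u s :> deriv u s" "DERIV v s :> deriv v s" using du dv that DERIV_deriv_iff_real_differentiable by auto
    show ?thesis unfolding curve_def Psi_def D1_def
      by (rule hvd_vector3; (rule derivative_eq_intros a refl)+; simp add: algebra_simps)
  qed
  define u1 u2 v1 v2 sh ch c si where "u1 = deriv u t" and "u2 = deriv (deriv u) t" and "v1 = deriv v t"
    and "v2 = deriv (deriv v) t" and "sh = sinh (u t)" and "ch = cosh (u t)" and "c = cos (v t)" and "si = sin (v t)"
  define D2 where "D2 = (vector [sh * u1 * u1 * c + ch * u2 * c - ch * u1 *  si * v1 - (ch * u1 *  si * v1 + sh * c * v1 * v1 + sh *  si * v2),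
                      sh * u1^2 *  si + ch * u2 *  si + ch * u1 * c * v1 + ch * u1 * c * v1 - sh *  si * v1^2 + sh * c * v2,
                      ch * u1^2 + sh * u2] :: real^3)"
  have a: "DERIV u t :> u1" "DERIV v t :> v1" "DERIV (deriv u) t :> u2" "DERIV (deriv v) t :> v2"
    using du dv I DERIV_deriv_iff_real_differentiable unfolding u1_def v1_def u2_def v2_def by auto
  have "(D1 has_vector_derivative D2) (at t)"
    unfolding D1_def D2_def
    by (rule hvd_vector3; (rule derivative_eq_intros a refl)+; simp add: sh_def ch_def c_def si_def u1_def v1_def algebra_simps power2_eq_square)
  then have "((\<lambda>s. vector_derivative (curve u v) (at s)) has_vector_derivative D2) (at t)"
    by (rule has_vector_derivative_transform_within_open[OF _ I]) (metis D1 vector_derivative_at)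
  then have vd: "vector_derivative (\<lambda>s. vector_derivative (curve u v) (at s)) (at t) = D2"
    by (rule vector_derivative_at)
  have lsc: "lor x (r *\<^sub>R y) = r * lor x y" "lor (r *\<^sub>R y) x = r * lor y x" for x y r
    unfolding lor_def by (simp_all add: algebra_simps)
  have pyth: "c^2 + si^2 = 1" "ch^2 - sh^2 = 1" unfolding c_def si_def ch_def sh_def
    by (simp add: add.commute) (rule hyperbolic_pythagoras)
  show "curvature u v t = (1 / speed u v t) * (sinh (u t) * deriv v t * (deriv (deriv u) t - (deriv v t)^2 * sinh (u t) * cosh (u t))
      - deriv u t * (2 * deriv u t * deriv v t * cosh (u t) + deriv (deriv v) t * sinh (u t))) / (speed u v t)^2"
    unfolding curvature_def vd unormal_def lsc
    using curv_alg[OF pyth, of u1 u2 v1 v2] unfolding D2_def u1_def u2_def v1_def v2_def sh_def ch_def c_def si_def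
    by simp
  show "lor (unormal u v t) (xi (u t) (v t)) = (1 / speed u v t) * (sinh (u t) * deriv v t)"
    unfolding xi_def unormal_def lsc
    using xi_alg[OF pyth, of u1 v1] unfolding u1_def v1_def sh_def ch_def c_def si_def
    by simp
qed


lemma core_alg:
  fixes P u0 spd sh ch u1 u2 v1 v2 \<alpha> :: real
  assumes pos: "P > 0" "u0 > 0" "spd > 0" "sh > 0" and sq: "spd^2 = u1^2 + sh^2 * v1^2"
  defines "ds \<equiv> (u1 * u2 + sh * ch * u1 * v1^2 + sh^2 * v1 * v2) / spd"
  defines "cond \<equiv> (sh * v1 * (u2 - v1^2 * sh * ch) - u1 * (2 * u1 * v1 * ch + v2 * sh)) - \<alpha> * sh * v1 * spd^2 / u0"
  shows "((\<alpha> * (P/u0) * u1 * u1 + u2 * P) * spd - P * u1 * ds)/(spd * spd) - (\<alpha> * (P/u0) * spd + P * sh * ch * v1^2 / spd)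
          = P * sh * v1 * cond / spd^3"
    and "((\<alpha> * (P/u0) * u1 * sh^2 * v1 + P * (2 * sh * ch * u1) * v1 + P * sh^2 * v2) * spd - P * sh^2 * v1 * ds)/(spd * spd)
          = - P * u1 * sh * cond / spd^3"
    and "(1 / spd) * (sh * v1 * (u2 - v1^2 * sh * ch) - u1 * (2 * u1 * v1 * ch + v2 * sh)) / spd^2 - \<alpha> * ((1 / spd) * (sh * v1)) / u0
          = cond / spd^3"
proof -
  have nz: "spd \<noteq> 0" "u0 \<noteq> 0" using pos by auto
  show "((\<alpha> * (P/u0) * u1 * u1 + u2 * P) * spd - P * u1 * ds)/(spd * spd) - (\<alpha> * (P/u0) * spd + P * sh * ch * v1^2 / spd)
          = P * sh * v1 * cond / spd^3"
    unfolding ds_def cond_def using nz sq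
    apply (simp add: field_simps)
    by algebra
  show "((\<alpha> * (P/u0) * u1 * sh^2 * v1 + P * (2 * sh * ch * u1) * v1 + P * sh^2 * v2) * spd - P * sh^2 * v1 * ds)/(spd * spd)
          = - P * u1 * sh * cond / spd^3"
    unfolding ds_def cond_def using nz sq
    apply (simp add: field_simps)
    by algebra
  show "(1 / spd) * (sh * v1 * (u2 - v1^2 * sh * ch) - u1 * (2 * u1 * v1 * ch + v2 * sh)) / spd^2 - \<alpha> * ((1 / spd) * (sh * v1)) / u0
          = cond / spd^3"
    unfolding cond_def using nz
    apply (simp add: field_simps)
    by algebra
qed


theorem proposition2p2:
  fixes \<alpha> :: real and u v :: "real \<Rightarrow> real" and I :: "real set"
  assumes "\<alpha> \<noteq> 0"
    and "open I" and "I \<noteq> {}"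
    and "\<forall>t\<in>I. u differentiable (at t) \<and> deriv u differentiable (at t)"
    and "\<forall>t\<in>I. v differentiable (at t) \<and> deriv v differentiable (at t)"
    and "\<forall>t\<in>I. u t > 0"
    and "\<forall>t\<in>I. (deriv u t)^2 + (sinh (u t))^2 * (deriv v t)^2 > 0"
  shows "alpha_stationary \<alpha> u v I \<longleftrightarrow>
    (\<forall>t\<in>I. curvature u v t = \<alpha> * lor (unormal u v t) (xi (u t) (v t)) / u t)"
proof -
  have pw: "(deriv (\<lambda>s. u s powr \<alpha> * deriv u s / speed u v s) t
       = \<alpha> * u t powr (\<alpha> - 1) * speed u v t
         + u t powr \<alpha> * sinh (u t) * cosh (u t) * (deriv v t)^2 / speed u v t
   \<and> deriv (\<lambda>s. u s powr \<alpha> * (sinh (u s))^2 * deriv v s / speed u v s) t = 0)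
    \<longleftrightarrow> curvature u v t = \<alpha> * lor (unormal u v t) (xi (u t) (v t)) / u t" if t: "t \<in> I" for t
  proof -
    define u1 u2 v1 v2 sh ch spd P where "u1 = deriv u t" and "u2 = deriv (deriv u) t" and "v1 = deriv v t"
      and "v2 = deriv (deriv v) t" and "sh = sinh (u t)" and "ch = cosh (u t)" and "spd = speed u v t" and "P = u t powr \<alpha>"
    define ds where "ds = (u1 * u2 + sh * ch * u1 * v1^2 + sh^2 * v1 * v2) / spd"
    define cond where "cond = (sh * v1 * (u2 - v1^2 * sh * ch) - u1 * (2 * u1 * v1 * ch + v2 * sh)) - \<alpha> * sh * v1 * spd^2 / u t"
    have ut: "u t > 0" using assms t by auto
    have Q: "u1^2 + sh^2 * v1^2 > 0" using assms t unfolding u1_def sh_def v1_def by auto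
    have diffs: "u differentiable (at t)" "deriv u differentiable (at t)" "v differentiable (at t)"
      "deriv v differentiable (at t)" "(deriv u t)^2 + (sinh (u t))^2 * (deriv v t)^2 > 0" using assms t by auto
    note D = derivs[OF diffs(1-4) ut diffs(5) u1_def u2_def v1_def v2_def spd_def sh_def ch_def ds_def]
    have pm: "u t powr (\<alpha> - 1) = P / u t" using ut by (simp add: P_def powr_diff)
    have Ppos: "P > 0" using ut by (simp add: P_def)
    have shpos: "sh > 0" using ut by (simp add: sh_def)
    have sq: "spd^2 = u1^2 + sh^2 * v1^2" using Q unfolding spd_def speed_def u1_def v1_def sh_def by simp
    have spdpos: "spd > 0" using Q unfolding spd_def speed_def u1_def v1_def sh_def by simp
    note core1 = core_alg(1)[OF Ppos ut spdpos shpos sq, of \<alpha> u2 ch v2]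
    note core2 = core_alg(2)[OF Ppos ut spdpos shpos sq, of \<alpha> ch v2 u2]
    note core3 = core_alg(3)[OF Ppos ut spdpos shpos sq, of u2 ch v2 \<alpha>]
    have E1: "deriv (\<lambda>s. u s powr \<alpha> * deriv u s / speed u v s) t - (\<alpha> * u t powr (\<alpha> - 1) * speed u v t
         + u t powr \<alpha> * sinh (u t) * cosh (u t) * (deriv v t)^2 / speed u v t) = P * sh * v1 * cond / spd^3"
      using DERIV_imp_deriv[OF D(2)[where \<alpha>=\<alpha>]] core1 unfolding pm ds_def cond_def
      by (simp add: P_def[symmetric] spd_def[symmetric] sh_def[symmetric] ch_def[symmetric] v1_def[symmetric])
    have E2: "deriv (\<lambda>s. u s powr \<alpha> * (sinh (u s))^2 * deriv v s / speed u v s) t = - P * u1 * sh * cond / spd^3"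
      using DERIV_imp_deriv[OF D(3)[where \<alpha>=\<alpha>]] core2 unfolding pm ds_def cond_def
      by (simp add: P_def[symmetric] spd_def[symmetric] sh_def[symmetric] ch_def[symmetric] v1_def[symmetric])
    have E3: "curvature u v t - \<alpha> * lor (unormal u v t) (xi (u t) (v t)) / u t = cond / spd^3"
      using curv_formula[OF assms(2) t assms(4) assms(5)] core3 unfolding cond_def
      by (simp add: spd_def[symmetric] sh_def[symmetric] ch_def[symmetric] v1_def[symmetric] u1_def[symmetric]
           u2_def[symmetric] v2_def[symmetric])
    have uv: "u1 \<noteq> 0 \<or> v1 \<noteq> 0" using Q by auto
    have "(P * sh * v1 * cond / spd^3 = 0 \<and> - P * u1 * sh * cond / spd^3 = 0) \<longleftrightarrow> cond = 0"
      using uv Ppos shpos spdpos by auto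
    moreover have "cond / spd^3 = 0 \<longleftrightarrow> cond = 0" using spdpos by simp
    ultimately show ?thesis using E1 E2 E3 by (smt (verit))
  qed
  show ?thesis unfolding alpha_stationary_def using pw by auto
qed

end
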